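(* Let $H$ and $G$ be real Hilbert spaces and let $Z$ be a nonempty closed convex subset of $H\times G$. Let $x_0\in H\times G$, let $\{\lambda_n\}_{n\in\mathbb{N}}\subset(0,1]$, and let $\{H_n\}_{n\in\mathbb{N}}$ be closed convex subsets of $H\times G$ with $Z\subset H_n$ for all $n$. Consider any sequence generated as follows: for $n=0,1,\dots$, $$x_{n+1/2}=x_n+\lambda_n\big(P_{H_n}(x_n)-x_n\big),$$ choose a closed convex set $C_n$ with $Z\subset C_n\subset H(x_n,x_{n+1/2})$, and set $$x_{n+1}=P_{H(x_0,x_n)\cap C_n}(x_0).$$ Then: 1. $Z\subset H(x_0,x_n)\cap C_n$ for all $n\in\mathbb{N}$; 2. $\|x_{n+1}-x_0\|\ge\|x_n-x_0\|$ for all $n\in\mathbb{N}$; 3. $\sum_{n=0}^{\infty}\|x_{n+1}-x_n\|^2<+\infty$; 4. $\sum_{n=0}^{\infty}\|x_{n+1/2}-x_n\|^2<+\infty$; 5. if for every $x\in H\times G$ and every subsequence $\{x_{k_n}\}$ with $x_{k_n}\rightharpoonup x$ (weakly) one has $x\in Z$, then $x_n\to P_Z(x_0)$ strongly.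
   Context: $H\times G$ carries the product Hilbert structure. For $x,y\in H\times G$, $H(x,y):=\{h\in H\times G:\ \langle h-y\mid x-y\rangle\le 0\}$ (so $H(x,x)$ is the whole space). $P_D$ denotes the metric projection onto a nonempty closed convex set $D$. *)

theory Defs
  imports "HOL-Analysis.Analysis"
begin

text \<open>Metric projection onto a set D (the library's closest_point requires heine_borel,
  which excludes infinite-dimensional Hilbert spaces): the (for nonempty closed convex D in a
  Hilbert space, unique) point of D nearest to x.\<close>
definition proj :: "'a::real_inner set \<Rightarrow> 'a \<Rightarrow> 'a" where
  "proj D x = (SOME p. p \<in> D \<and> (\<forall>y\<in>D. dist x p \<le> dist x y))"

definition halfsp :: "'a::real_inner \<Rightarrow> 'a \<Rightarrow> 'a set" where
  "halfsp x y = {h. inner (h - y) (x - y) \<le> 0}"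

definition weak_conv :: "(nat \<Rightarrow> 'a::real_inner) \<Rightarrow> 'a \<Rightarrow> bool" where
  "weak_conv u x \<longleftrightarrow> (\<forall>y. ((\<lambda>n. inner (u n) y) \<longlonglongrightarrow> inner x y))"

end

theory Submission
  imports Defs "HOL-Library.Diagonal_Subsequence"
begin

lemma norm_diff_sq:
  fixes a b :: "'a::real_inner"
  shows "(norm (a - b))\<^sup>2 = (norm a)\<^sup>2 + (norm b)\<^sup>2 - 2 * inner a b"
  by (simp add: power2_norm_eq_inner inner_diff_left inner_diff_right inner_commute)

lemma nearest_exists:
  fixes S :: "'a::{real_inner,complete_space} set"
  assumes S: "closed S" "convex S" "S \<noteq> {}"
  shows "\<exists>p\<in>S. \<forall>y\<in>S. dist x p \<le> dist x y"
proof -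
  define \<delta> where "\<delta> = Inf (dist x ` S)"
  have bdd: "bdd_below (dist x ` S)" by (auto intro: bdd_belowI[of _ 0])
  have dle: "\<And>y. y \<in> S \<Longrightarrow> \<delta> \<le> dist x y" unfolding \<delta>_def by (rule cInf_lower) (use bdd in auto)
  have d0: "0 \<le> \<delta>" unfolding \<delta>_def using S(3) by (intro cInf_greatest) auto
  have "\<forall>n. \<exists>y\<in>S. dist x y < \<delta> + 1/(Suc n)"
  proof
    fix n
    have "Inf (dist x ` S) < \<delta> + 1/(Suc n)" unfolding \<delta>_def by simp
    then show "\<exists>y\<in>S. dist x y < \<delta> + 1/(Suc n)" using cInf_lessD[of "dist x ` S"] S(3) by auto
  qed
  then obtain y where y: "\<And>n. y n \<in> S" "\<And>n. dist x (y n) < \<delta> + 1/(Suc n)" by metis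
  define e where "e n = 1 / real (Suc n)" for n
  have e: "\<And>n. 0 < e n" "\<And>n. e n \<le> 1" unfolding e_def by (auto simp: field_simps)
  have ysq: "(dist x (y n))\<^sup>2 \<le> \<delta>\<^sup>2 + (2*\<delta>+1) * e n" for n
  proof -
    have "(dist x (y n))\<^sup>2 \<le> (\<delta> + e n)\<^sup>2"
      using y(2)[of n] unfolding e_def by (intro power_mono) auto
    also have "\<dots> = \<delta>\<^sup>2 + 2*\<delta>*e n + e n * e n" by (simp add: power2_eq_square algebra_simps)
    also have "\<dots> \<le> \<delta>\<^sup>2 + 2*\<delta>*e n + e n" using e[of n] by (simp add: mult_left_le)
    finally show ?thesis by (simp add: algebra_simps)
  qed
  have para: "(norm (y m - y n))\<^sup>2 \<le> 2*(2*\<delta>+1)*(e m + e n)" for m n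
  proof -
    define mid where "mid = (1/2) *\<^sub>R y m + (1/2) *\<^sub>R y n"
    have "mid \<in> S" unfolding mid_def using S(2) y(1) by (intro convexD) auto
    then have "\<delta> \<le> dist x mid" by (rule dle)
    then have m2: "\<delta>\<^sup>2 \<le> (norm (x - mid))\<^sup>2" using d0 by (simp add: dist_norm power_mono)
    have id: "(norm (y m - y n))\<^sup>2 = 2*(norm (x - y m))\<^sup>2 + 2*(norm (x - y n))\<^sup>2 - 4*(norm (x - mid))\<^sup>2"
      unfolding mid_def power2_norm_eq_inner
      by (simp add: inner_diff_left inner_diff_right inner_add_left inner_add_right inner_commute algebra_simps)
    show ?thesis using ysq[of m] ysq[of n] m2 unfolding id by (simp add: dist_norm algebra_simps)
  qed
  have "Cauchy y"
  proof (rule metric_CauchyI)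
    fix \<epsilon> :: real assume "0 < \<epsilon>"
    obtain N :: nat where N: "4*(2*\<delta>+1) / \<epsilon>\<^sup>2 < N" using reals_Archimedean2 by blast
    show "\<exists>M. \<forall>m\<ge>M. \<forall>n\<ge>M. dist (y m) (y n) < \<epsilon>"
    proof (intro exI allI impI)
      fix m n assume mn: "N \<le> m" "N \<le> n"
      have "e m \<le> 1 / real (Suc N)" "e n \<le> 1 / real (Suc N)" unfolding e_def using mn
        by (auto intro!: divide_left_mono)
      then have "2*(2*\<delta>+1)*(e m + e n) \<le> 2*(2*\<delta>+1)*(2 / real (Suc N))"
        using d0 by (intro mult_left_mono) auto
      also have "\<dots> < \<epsilon>\<^sup>2"
      proof -
        have "4*(2*\<delta>+1) < \<epsilon>\<^sup>2 * N" using N \<open>0<\<epsilon>\<close> by (simp add: field_simps)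
        also have "\<dots> \<le> \<epsilon>\<^sup>2 * real (Suc N)" by (intro mult_left_mono) auto
        finally show ?thesis by (simp add: field_simps)
      qed
      finally have "(dist (y m) (y n))\<^sup>2 < \<epsilon>\<^sup>2" using para[of m n] by (simp add: dist_norm)
      then show "dist (y m) (y n) < \<epsilon>" using \<open>0<\<epsilon>\<close> by (simp add: power_less_imp_less_base)
    qed
  qed
  then obtain p where p: "y \<longlonglongrightarrow> p" using Cauchy_convergent_iff convergent_def by blast
  have pS: "p \<in> S" using closed_sequentially[OF S(1)] y(1) p by blast
  have "(\<lambda>n. dist x (y n)) \<longlonglongrightarrow> dist x p" by (intro tendsto_intros p)
  moreover have "(\<lambda>n. dist x (y n)) \<longlonglongrightarrow> \<delta>"
  proof (rule tendsto_sandwich[of "\<lambda>_. \<delta>" _ _ "\<lambda>n. \<delta> + 1/(Suc n)"])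
    show "\<forall>\<^sub>F n in sequentially. \<delta> \<le> dist x (y n)" using dle y(1) by auto
    show "\<forall>\<^sub>F n in sequentially. dist x (y n) \<le> \<delta> + 1/(Suc n)" using y(2) by (intro always_eventually allI less_imp_le)
    show "(\<lambda>n. \<delta> + 1 / real (Suc n)) \<longlonglongrightarrow> \<delta>"
      using tendsto_add[OF tendsto_const LIMSEQ_inverse_real_of_nat] by (simp add: inverse_eq_divide)
  qed simp
  ultimately have "dist x p = \<delta>" using LIMSEQ_unique by blast
  then show ?thesis using pS dle by auto
qed

lemma proj_props:
  fixes S :: "'a::{real_inner,complete_space} set"
  assumes S: "closed S" "convex S" "S \<noteq> {}"
  shows "proj S x \<in> S" "\<And>y. y \<in> S \<Longrightarrow> dist x (proj S x) \<le> dist x y"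
    "\<And>y. y \<in> S \<Longrightarrow> inner (x - proj S x) (y - proj S x) \<le> 0"
proof -
  have *: "proj S x \<in> S \<and> (\<forall>y\<in>S. dist x (proj S x) \<le> dist x y)"
  proof -
    have ex: "\<exists>p. p \<in> S \<and> (\<forall>y\<in>S. dist x p \<le> dist x y)" using nearest_exists[OF S] by blast
    show ?thesis unfolding proj_def by (rule someI_ex[OF ex])
  qed
  then show "proj S x \<in> S" "\<And>y. y \<in> S \<Longrightarrow> dist x (proj S x) \<le> dist x y" by auto
  show "\<And>y. y \<in> S \<Longrightarrow> inner (x - proj S x) (y - proj S x) \<le> 0"
    using any_closest_point_dot[OF S(2) S(1)] * by blast
qed

lemma proj_orth:
  fixes S :: "'a::{real_inner,complete_space} set"
  assumes S: "closed S" "subspace S" and m: "m \<in> S"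
  shows "inner (x - proj S x) m = 0"
proof -
  have cS: "convex S" "S \<noteq> {}" using S subspace_imp_convex subspace_0 by blast+
  have q: "proj S x \<in> S" using proj_props(1)[OF S(1) cS] .
  have "proj S x + m \<in> S" "proj S x - m \<in> S" using q m S(2) subspace_add subspace_diff by blast+
  have "inner (x - proj S x) (proj S x + m - proj S x) \<le> 0" by (rule proj_props(3)[OF S(1) cS]) fact
  moreover have "inner (x - proj S x) (proj S x - m - proj S x) \<le> 0" by (rule proj_props(3)[OF S(1) cS]) fact
  ultimately show ?thesis by (simp add: inner_diff_right)
qed

lemma riesz_repr:
  fixes f :: "'a::{real_inner,complete_space} \<Rightarrow> real"
  assumes add: "\<And>a b. f (a + b) = f a + f b" and sc: "\<And>c a. f (c *\<^sub>R a) = c * f a"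
    and bd: "\<And>a. \<bar>f a\<bar> \<le> K * norm a"
  shows "\<exists>z. \<forall>y. f y = inner z y"
proof (cases "\<forall>y. f y = 0")
  case True then show ?thesis by (intro exI[of _ 0]) auto
next
  case False
  then obtain v where v: "f v \<noteq> 0" by blast
  have bl: "bounded_linear f"
  proof (rule bounded_linear_intro[of _ "max K 0"])
    fix a :: 'a
    have "K * norm a \<le> max K 0 * norm a" by (intro mult_right_mono) auto
    then show "norm (f a) \<le> norm a * max K 0"
      using bd[of a] by (simp add: mult.commute)
  qed (auto simp: add sc)
  define N where "N = {y. f y = 0}"
  have f0: "f 0 = 0" using sc[of 0 0] by simp
  have cN: "closed N" unfolding N_def
    by (rule closed_Collect_eq) (auto intro: linear_continuous_on[OF bl])
  have sN: "subspace N" unfolding N_def subspace_def by (auto simp: add sc f0)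
  have cvN: "convex N" "N \<noteq> {}" using sN subspace_imp_convex subspace_0 by blast+
  define q where "q = proj N v"
  define w where "w = v - q"
  have qN: "q \<in> N" unfolding q_def using proj_props(1)[OF cN cvN] .
  have fm: "f (a - b) = f a - f b" for a b using add[of "a - b" b] by simp
  have fw: "f w = f v" unfolding w_def fm using qN N_def by simp
  have orth: "inner w n = 0" if "n \<in> N" for n unfolding w_def q_def using proj_orth[OF cN sN that] .
  have wne: "w \<noteq> 0" using fw v f0 by auto
  have ww: "inner w w \<noteq> 0" using wne by simp
  show ?thesis
  proof (intro exI allI)
    fix y
    have "y - (f y / f w) *\<^sub>R w \<in> N" unfolding N_def using fw v by (simp add: fm sc)
    then have "inner w (y - (f y / f w) *\<^sub>R w) = 0" by (rule orth)
    then have "inner w y = (f y / f w) * inner w w" by (simp add: inner_diff_right)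
    then show "f y = inner ((f w / inner w w) *\<^sub>R w) y" using ww fw v by (simp add: field_simps)
  qed
qed


lemma subspace_closure_real:
  fixes S :: "'a::real_normed_vector set"
  assumes S: "subspace S"
  shows "subspace (closure S)"
  unfolding subspace_def
proof (intro conjI ballI allI)
  show "0 \<in> closure S" using S subspace_0 closure_subset by blast
next
  fix x y assume "x \<in> closure S" "y \<in> closure S"
  then obtain a b where a: "\<forall>n. a n \<in> S" "a \<longlonglongrightarrow> x" and b: "\<forall>n. b n \<in> S" "b \<longlonglongrightarrow> y"
    unfolding closure_sequential by blast
  have "\<forall>n. a n + b n \<in> S" using a b S subspace_add by blast
  moreover have "(\<lambda>n. a n + b n) \<longlonglongrightarrow> x + y" using a b by (intro tendsto_intros)
  ultimately show "x + y \<in> closure S" unfolding closure_sequential by (intro exI[of _ "\<lambda>n. a n + b n"]) simp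
next
  fix c :: real and x assume "x \<in> closure S"
  then obtain a where a: "\<forall>n. a n \<in> S" "a \<longlonglongrightarrow> x" unfolding closure_sequential by blast
  have "\<forall>n. c *\<^sub>R a n \<in> S" using a S subspace_scale by blast
  moreover have "(\<lambda>n. c *\<^sub>R a n) \<longlonglongrightarrow> c *\<^sub>R x" using a by (intro tendsto_intros)
  ultimately show "c *\<^sub>R x \<in> closure S" unfolding closure_sequential by (intro exI[of _ "\<lambda>n. c *\<^sub>R a n"]) simp
qed

lemma weak_compact:
  fixes u :: "nat \<Rightarrow> 'a::{real_inner,complete_space}"
  assumes B: "\<And>n. norm (u n) \<le> B"
  shows "\<exists>k z. strict_mono k \<and> weak_conv (u \<circ> k) z"
proof -
  have B0: "0 \<le> B" by (rule order.trans[OF norm_ge_zero B])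
  have ibd: "\<bar>inner (u n) y\<bar> \<le> B * norm y" for n y
  proof -
    have "\<bar>inner (u n) y\<bar> \<le> norm (u n) * norm y" by (rule Cauchy_Schwarz_ineq2)
    also have "\<dots> \<le> B * norm y" by (intro mult_right_mono B) simp
    finally show ?thesis .
  qed
  interpret S: subseqs "\<lambda>m s. convergent (\<lambda>j. inner (u (s j)) (u m))"
  proof unfold_locales
    fix m and s :: "nat \<Rightarrow> nat" assume "strict_mono s"
    have "bounded (range (\<lambda>j. inner (u (s j)) (u m)))"
      unfolding bounded_iff using ibd by (auto simp: real_norm_def)
    from bounded_imp_convergent_subsequence[OF this] obtain l r where
      "strict_mono r" "((\<lambda>j. inner (u (s j)) (u m)) \<circ> r) \<longlonglongrightarrow> l" by blast
    then show "\<exists>r'. strict_mono r' \<and> convergent (\<lambda>j. inner (u ((s \<circ> r') j)) (u m))"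
      by (auto simp: convergent_def o_def)
  qed
  define k where "k = S.diagseq"
  have k: "strict_mono k" unfolding k_def by (rule S.subseq_diagseq)
  have c1: "convergent (\<lambda>n. inner (u (k n)) (u m))" for m
  proof -
    have "convergent (\<lambda>j. inner (u ((S.diagseq \<circ> (+) (Suc m)) j)) (u m))"
    proof (rule S.diagseq_holds)
      fix r s n assume r: "strict_mono (r::nat\<Rightarrow>nat)" and c: "convergent (\<lambda>j. inner (u (s j)) (u n))"
      from convergent_subseq_convergent[OF c r]
      show "convergent (\<lambda>j. inner (u ((s \<circ> r) j)) (u n))" by (simp add: o_def)
    qed
    then obtain l where "(\<lambda>j. inner (u (k (j + Suc m))) (u m)) \<longlonglongrightarrow> l"
      by (auto simp: convergent_def o_def k_def add.commute)
    then have "(\<lambda>n. inner (u (k n)) (u m)) \<longlonglongrightarrow> l" by (rule LIMSEQ_offset)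
    then show ?thesis unfolding convergent_def by blast
  qed
  have c2: "convergent (\<lambda>n. inner (u (k n)) d)" if "d \<in> span (range u)" for d
    using that
  proof (induction rule: span_induct_alt)
    case base then show ?case by (simp add: convergent_const)
  next
    case (step c x y)
    then obtain m where "x = u m" by auto
    obtain L1 L2 where "(\<lambda>n. inner (u (k n)) x) \<longlonglongrightarrow> L1" "(\<lambda>n. inner (u (k n)) y) \<longlonglongrightarrow> L2"
      using step c1[of m] \<open>x = u m\<close> by (auto simp: convergent_def)
    then have "(\<lambda>n. inner (u (k n)) (c *\<^sub>R x + y)) \<longlonglongrightarrow> c * L1 + L2"
      unfolding inner_add_right inner_scaleR_right by (intro tendsto_intros)
    then show ?case by (auto simp: convergent_def)
  qed
  define M where "M = closure (span (range u))"
  have c3: "convergent (\<lambda>n. inner (u (k n)) y)" if y: "y \<in> M" for y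
  proof -
    have "Cauchy (\<lambda>n. inner (u (k n)) y)"
    proof (rule metric_CauchyI)
      fix e :: real assume e: "0 < e"
      then have "e / (4*(B+1)) > 0" using B0 by simp
      have "\<forall>e>0. \<exists>d\<in>span (range u). dist d y < e" using y unfolding M_def closure_approachable .
      from this[rule_format, OF \<open>e / (4*(B+1)) > 0\<close>]
      obtain d where d: "d \<in> span (range u)" "dist d y < e / (4*(B+1))" by blast
      have "Cauchy (\<lambda>n. inner (u (k n)) d)" by (rule convergent_Cauchy[OF c2[OF d(1)]])
      from metric_CauchyD[OF this half_gt_zero[OF e]]
      obtain N where N: "\<And>m n. m \<ge> N \<Longrightarrow> n \<ge> N \<Longrightarrow> dist (inner (u (k m)) d) (inner (u (k n)) d) < e/2"
        by blast
      show "\<exists>N. \<forall>m\<ge>N. \<forall>n\<ge>N. dist (inner (u (k m)) y) (inner (u (k n)) y) < e"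
      proof (intro exI allI impI)
        fix m n assume mn: "m \<ge> N" "n \<ge> N"
        have eq: "inner (u (k m)) y - inner (u (k n)) y
           = (inner (u (k m)) d - inner (u (k n)) d) + (inner (u (k m)) (y - d) - inner (u (k n)) (y - d))"
          by (simp add: inner_diff_right)
        have nd: "norm (y - d) \<le> e / (4*(B+1))" using d(2) by (simp add: dist_norm norm_minus_commute)
        have bb: "B * norm (y - d) \<le> B * (e / (4*(B+1)))" by (intro mult_left_mono nd B0)
        have "\<bar>inner (u (k m)) (y - d)\<bar> \<le> B * (e / (4*(B+1)))"
          using ibd[of "k m" "y - d"] bb by linarith
        moreover have "\<bar>inner (u (k n)) (y - d)\<bar> \<le> B * (e / (4*(B+1)))"
          using ibd[of "k n" "y - d"] bb by linarith
        moreover have "B * (e / (4*(B+1))) < e/4" using B0 e by (simp add: field_simps)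
        moreover have "\<bar>inner (u (k m)) d - inner (u (k n)) d\<bar> < e/2" using N[OF mn] by (simp add: dist_real_def)
        ultimately show "dist (inner (u (k m)) y) (inner (u (k n)) y) < e"
          unfolding dist_real_def eq by linarith
      qed
    qed
    then show ?thesis using Cauchy_convergent_iff by blast
  qed
  have sM: "subspace M" unfolding M_def by (intro subspace_closure_real subspace_span)
  have cM: "closed M" unfolding M_def by simp
  have uM: "u n \<in> M" for n unfolding M_def by (rule subsetD[OF closure_subset]) (rule span_base, simp)
  have c4: "convergent (\<lambda>n. inner (u (k n)) y)" for y
  proof -
    define q where "q = proj M y"
    have eq: "inner (u (k n)) y = inner (u (k n)) q" for n
      using proj_orth[OF cM sM uM, of y "k n"] unfolding q_def by (simp add: inner_diff_right inner_commute)
    have cvM: "convex M" "M \<noteq> {}" using sM subspace_imp_convex subspace_0 by blast+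
    have qM: "q \<in> M" unfolding q_def by (rule proj_props(1)[OF cM cvM])
    show ?thesis unfolding eq by (rule c3[OF qM])
  qed
  define f where "f y = lim (\<lambda>n. inner (u (k n)) y)" for y
  have fl: "(\<lambda>n. inner (u (k n)) y) \<longlonglongrightarrow> f y" for y unfolding f_def by (rule convergent_LIMSEQ_iff[THEN iffD1, OF c4])
  have fadd: "f (a + b) = f a + f b" for a b
  proof -
    have "(\<lambda>n. inner (u (k n)) (a + b)) \<longlonglongrightarrow> f a + f b"
      unfolding inner_add_right by (intro tendsto_intros fl)
    then show ?thesis by (rule LIMSEQ_unique[OF fl])
  qed
  have fsc: "f (c *\<^sub>R a) = c * f a" for c a
  proof -
    have "(\<lambda>n. inner (u (k n)) (c *\<^sub>R a)) \<longlonglongrightarrow> c * f a"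
      unfolding inner_scaleR_right by (intro tendsto_intros fl)
    then show ?thesis by (rule LIMSEQ_unique[OF fl])
  qed
  have fbd: "\<bar>f a\<bar> \<le> B * norm a" for a
  proof -
    have "(\<lambda>n. \<bar>inner (u (k n)) a\<bar>) \<longlonglongrightarrow> \<bar>f a\<bar>" by (intro tendsto_intros fl)
    then show ?thesis using ibd by (intro LIMSEQ_le_const2) auto
  qed
  obtain z where z: "\<And>y. f y = inner z y" using riesz_repr[OF fadd fsc fbd] by blast
  have "weak_conv (u \<circ> k) z" unfolding weak_conv_def using fl z by (simp add: o_def)
  with k show ?thesis by blast
qed


lemma halfsp_eq: "halfsp a b = {h. inner (a - b) h \<le> inner (a - b) b}"
  unfolding halfsp_def by (auto simp: inner_diff_left inner_commute)

lemma halfsp_closed: "closed (halfsp a b)" unfolding halfsp_eq by (rule closed_halfspace_le)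
lemma halfsp_convex: "convex (halfsp a b)" unfolding halfsp_eq by (rule convex_halfspace_le)
lemma halfsp_self: "halfsp a a = UNIV" unfolding halfsp_def by simp

lemma sq_expand_ge:
  fixes a b :: "'a::real_inner"
  assumes "inner a b \<le> 0"
  shows "(norm (a - b))\<^sup>2 \<ge> (norm a)\<^sup>2 + (norm b)\<^sup>2"
  using assms unfolding norm_diff_sq by simp

theorem proposition3:
  fixes Z :: "('h::{real_inner,complete_space} \<times> 'g::{real_inner,complete_space}) set"
    and x xh :: "nat \<Rightarrow> 'h \<times> 'g"
    and lam :: "nat \<Rightarrow> real"
    and Hn Cn :: "nat \<Rightarrow> ('h \<times> 'g) set"
  assumes Z: "Z \<noteq> {}" "closed Z" "convex Z"
    and lam: "\<And>n. 0 < lam n \<and> lam n \<le> 1"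
    and Hn: "\<And>n. closed (Hn n) \<and> convex (Hn n) \<and> Z \<subseteq> Hn n"
    and xh: "\<And>n. xh n = x n + lam n *\<^sub>R (proj (Hn n) (x n) - x n)"
    and Cn: "\<And>n. closed (Cn n) \<and> convex (Cn n) \<and> Z \<subseteq> Cn n \<and> Cn n \<subseteq> halfsp (x n) (xh n)"
    and xs: "\<And>n. x (Suc n) = proj (halfsp (x 0) (x n) \<inter> Cn n) (x 0)"
  shows "(\<forall>n. Z \<subseteq> halfsp (x 0) (x n) \<inter> Cn n)
    \<and> (\<forall>n. norm (x (Suc n) - x 0) \<ge> norm (x n - x 0))
    \<and> summable (\<lambda>n. (norm (x (Suc n) - x n))\<^sup>2)
    \<and> summable (\<lambda>n. (norm (xh n - x n))\<^sup>2)
    \<and> ((\<forall>z k. strict_mono k \<and> weak_conv (x \<circ> k) z \<longrightarrow> z \<in> Z)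
         \<longrightarrow> x \<longlonglongrightarrow> proj Z (x 0))"
proof -
  define Q where "Q n = halfsp (x 0) (x n) \<inter> Cn n" for n
  have xsQ: "x (Suc n) = proj (Q n) (x 0)" for n unfolding Q_def by (rule xs)
  have P1: "Z \<subseteq> halfsp (x 0) (x n)" for n
  proof (induction n)
    case 0 then show ?case by (simp add: halfsp_self)
  next
    case (Suc n)
    have ZQ: "Z \<subseteq> Q n" unfolding Q_def using Suc Cn[of n] by blast
    have QQ: "closed (Q n)" "convex (Q n)" "Q n \<noteq> {}" unfolding Q_def
      using Cn[of n] halfsp_closed halfsp_convex ZQ Z(1) unfolding Q_def
      by (auto intro!: closed_Int convex_Int)
    show ?case
    proof
      fix z assume "z \<in> Z"
      then have "inner (x 0 - proj (Q n) (x 0)) (z - proj (Q n) (x 0)) \<le> 0"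
        using proj_props(3)[OF QQ] ZQ by blast
      then show "z \<in> halfsp (x 0) (x (Suc n))" by (simp add: halfsp_def xsQ inner_commute)
    qed
  qed
  have ZQ: "Z \<subseteq> Q n" for n unfolding Q_def using P1[of n] Cn[of n] by blast
  have QQ: "closed (Q n)" "convex (Q n)" "Q n \<noteq> {}" for n
    using Cn[of n] halfsp_closed halfsp_convex ZQ[of n] Z(1) unfolding Q_def
    by (auto intro!: closed_Int convex_Int)
  have xQ: "x (Suc n) \<in> Q n" for n unfolding xsQ by (rule proj_props(1)[OF QQ])
  have xle: "dist (x 0) (x (Suc n)) \<le> dist (x 0) z" if "z \<in> Z" for n z
    unfolding xsQ using proj_props(2)[OF QQ] ZQ that by blast
  define d where "d n = norm (x n - x 0)" for n
  have key: "(d (Suc n))\<^sup>2 \<ge> (d n)\<^sup>2 + (norm (x (Suc n) - x n))\<^sup>2" for n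
  proof -
    have "x (Suc n) \<in> halfsp (x 0) (x n)" using xQ[of n] unfolding Q_def by blast
    then have "inner (x (Suc n) - x n) (x 0 - x n) \<le> 0" unfolding halfsp_def by simp
    from sq_expand_ge[OF this] have "(norm (x (Suc n) - x n - (x 0 - x n)))\<^sup>2 \<ge> (norm (x (Suc n) - x n))\<^sup>2 + (norm (x 0 - x n))\<^sup>2" .
    then show ?thesis unfolding d_def by (simp add: norm_minus_commute add.commute)
  qed
  have dmono: "d n \<le> d (Suc n)" for n
  proof -
    have "(d n)\<^sup>2 \<le> (d (Suc n))\<^sup>2" using key[of n] zero_le_power2[of "norm (x (Suc n) - x n)"] by linarith
    then show ?thesis by (rule power2_le_imp_le) (simp add: d_def)
  qed
  define p where "p = proj Z (x 0)"
  have pZ: "p \<in> Z" unfolding p_def by (rule proj_props(1)[OF Z(2) Z(3) Z(1)])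
  define R where "R = norm (p - x 0)"
  have dR: "d n \<le> R" for n
  proof (cases n)
    case 0 then show ?thesis unfolding d_def R_def by simp
  next
    case (Suc m) then show ?thesis using xle[OF pZ, of m] unfolding d_def R_def
      by (simp add: dist_norm norm_minus_commute)
  qed
  have d0: "0 \<le> d n" for n unfolding d_def by simp
  have part3: "summable (\<lambda>n. (norm (x (Suc n) - x n))\<^sup>2)"
  proof (rule summableI_nonneg_bounded)
    fix n
    have "(\<Sum>i<n. (norm (x (Suc i) - x i))\<^sup>2) \<le> (\<Sum>i<n. (d (Suc i))\<^sup>2 - (d i)\<^sup>2)"
    proof (rule sum_mono)
      fix i show "(norm (x (Suc i) - x i))\<^sup>2 \<le> (d (Suc i))\<^sup>2 - (d i)\<^sup>2" using key[of i] by linarith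
    qed
    also have "\<dots> = (d n)\<^sup>2 - (d 0)\<^sup>2" by (rule sum_lessThan_telescope)
    also have "\<dots> \<le> R\<^sup>2" using power_mono[OF dR d0, of n 2] zero_le_power2[of "d 0"] by linarith
    finally show "(\<Sum>i<n. (norm (x (Suc i) - x i))\<^sup>2) \<le> R\<^sup>2" .
  qed simp
  have part4: "summable (\<lambda>n. (norm (xh n - x n))\<^sup>2)"
  proof (rule summable_comparison_test'[OF part3])
    fix n :: nat
    have "x (Suc n) \<in> halfsp (x n) (xh n)" using xQ[of n] Cn[of n] unfolding Q_def by blast
    then have "inner (x (Suc n) - xh n) (x n - xh n) \<le> 0" unfolding halfsp_def by simp
    from sq_expand_ge[OF this] have "(norm (x (Suc n) - xh n - (x n - xh n)))\<^sup>2 \<ge> (norm (x (Suc n) - xh n))\<^sup>2 + (norm (x n - xh n))\<^sup>2" .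
    moreover have e1: "x (Suc n) - xh n - (x n - xh n) = x (Suc n) - x n" by simp
    moreover have e2: "norm (x n - xh n) = norm (xh n - x n)" by (rule norm_minus_commute)
    ultimately have f: "(norm (x (Suc n) - xh n))\<^sup>2 + (norm (xh n - x n))\<^sup>2 \<le> (norm (x (Suc n) - x n))\<^sup>2"
      by (simp only:)
    then have "(norm (x (Suc n) - x n))\<^sup>2 \<ge> (norm (xh n - x n))\<^sup>2"
      using zero_le_power2[of "norm (x (Suc n) - xh n)"] by linarith
    then show "norm ((norm (xh n - x n))\<^sup>2) \<le> (norm (x (Suc n) - x n))\<^sup>2" by simp
  qed
  have part5: "x \<longlonglongrightarrow> p" if hw: "\<forall>z k. strict_mono k \<and> weak_conv (x \<circ> k) z \<longrightarrow> z \<in> Z"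
  proof -
    have inc: "incseq d" using dmono by (rule incseq_SucI)
    obtain L where L: "d \<longlonglongrightarrow> L" "\<forall>i. d i \<le> L" using incseq_convergent[OF inc] dR by blast
    have LR: "L \<le> R" using L(1) dR by (intro LIMSEQ_le_const2) auto
    have L0: "0 \<le> L" by (rule order.trans[OF d0 L(2)[rule_format]])
    have xb: "norm (x n) \<le> norm (x 0) + R" for n
    proof -
      have "norm (x n) \<le> norm (x n - x 0) + norm (x 0)" using norm_triangle_ineq[of "x n - x 0" "x 0"] by simp
      then show ?thesis using dR[of n] unfolding d_def by simp
    qed
    obtain k z where kz: "strict_mono k" "weak_conv (x \<circ> k) z" using weak_compact[of x "norm (x 0) + R", OF xb] by blast
    have zZ: "z \<in> Z" using hw[rule_format, of k z] kz by simp
    have lim: "(\<lambda>n. inner (x (k n) - x 0) (z - x 0)) \<longlonglongrightarrow> inner (z - x 0) (z - x 0)"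
    proof -
      have "(\<lambda>n. inner (x (k n)) (z - x 0)) \<longlonglongrightarrow> inner z (z - x 0)"
        using kz(2) unfolding weak_conv_def o_def by (rule spec)
      then have "(\<lambda>n. inner (x (k n)) (z - x 0) - inner (x 0) (z - x 0)) \<longlonglongrightarrow> inner z (z - x 0) - inner (x 0) (z - x 0)"
        by (rule tendsto_diff[OF _ tendsto_const])
      then show ?thesis by (simp add: inner_diff_left)
    qed
    have bnd: "inner (x (k n) - x 0) (z - x 0) \<le> L * norm (z - x 0)" for n
    proof -
      have "inner (x (k n) - x 0) (z - x 0) \<le> d (k n) * norm (z - x 0)"
        unfolding d_def by (rule order.trans[OF _ Cauchy_Schwarz_ineq2]) simp
      also have "\<dots> \<le> L * norm (z - x 0)" using L(2) by (intro mult_right_mono) auto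
      finally show ?thesis .
    qed
    have "inner (z - x 0) (z - x 0) \<le> L * norm (z - x 0)"
      using lim bnd by (intro LIMSEQ_le_const2) auto
    then have "norm (z - x 0) * norm (z - x 0) \<le> L * norm (z - x 0)"
      by (simp add: power2_eq_square[symmetric] power2_norm_eq_inner[symmetric])
    then have zL: "norm (z - x 0) \<le> L" using L0
      by (cases "norm (z - x 0) = 0") (auto simp: mult_le_cancel_right)
    have "R \<le> norm (z - x 0)" unfolding R_def p_def
      using proj_props(2)[OF Z(2) Z(3) Z(1) zZ, of "x 0"] by (simp add: dist_norm norm_minus_commute)
    with zL LR have LeqR: "L = R" by linarith
    have bd2: "(norm (x n - p))\<^sup>2 \<le> R\<^sup>2 - (d n)\<^sup>2" for n
    proof -
      have "p \<in> halfsp (x 0) (x n)" using P1 pZ by blast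
      then have "inner (p - x n) (x 0 - x n) \<le> 0" unfolding halfsp_def by simp
      from sq_expand_ge[OF this] have "(norm (p - x n - (x 0 - x n)))\<^sup>2 \<ge> (norm (p - x n))\<^sup>2 + (norm (x 0 - x n))\<^sup>2" .
      then show ?thesis unfolding R_def d_def by (simp add: norm_minus_commute)
    qed
    have "(\<lambda>n. (norm (x n - p))\<^sup>2) \<longlonglongrightarrow> 0"
    proof (rule tendsto_sandwich[of "\<lambda>_. 0" _ _ "\<lambda>n. R\<^sup>2 - (d n)\<^sup>2"])
      show "(\<lambda>n. R\<^sup>2 - (d n)\<^sup>2) \<longlonglongrightarrow> 0"
      proof -
        have "(\<lambda>n. R\<^sup>2 - (d n)\<^sup>2) \<longlonglongrightarrow> R\<^sup>2 - L\<^sup>2" by (intro tendsto_intros L(1))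
        then show ?thesis using LeqR by simp
      qed
    qed (use bd2 in auto)
    then have "(\<lambda>n. sqrt ((norm (x n - p))\<^sup>2)) \<longlonglongrightarrow> sqrt 0" by (intro tendsto_intros)
    then have "(\<lambda>n. norm (x n - p)) \<longlonglongrightarrow> 0" by simp
    then have "(\<lambda>n. x n - p) \<longlonglongrightarrow> 0" by (simp only: tendsto_norm_zero_iff)
    then show ?thesis by (rule LIM_zero_cancel)
  qed
  show ?thesis
  proof (intro conjI allI impI)
    fix n show "Z \<subseteq> halfsp (x 0) (x n) \<inter> Cn n" using ZQ[of n] unfolding Q_def .
  next
    fix n show "norm (x n - x 0) \<le> norm (x (Suc n) - x 0)" using dmono[of n] unfolding d_def .
  next
    show "summable (\<lambda>n. (norm (x (Suc n) - x n))\<^sup>2)" by (rule part3)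
  next
    show "summable (\<lambda>n. (norm (xh n - x n))\<^sup>2)" by (rule part4)
  next
    assume "\<forall>z k. strict_mono k \<and> weak_conv (x \<circ> k) z \<longrightarrow> z \<in> Z"
    then show "x \<longlonglongrightarrow> proj Z (x 0)" using part5 unfolding p_def by blast
  qed
qed

end
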